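(* Let $G$ be an $X-Y$ normalized graph, let $S \subseteq N(X)$, and assume that no vertex of $S$ is adjacent to a vertex of $Y$. Then there is exactly one important witness $K(S)$ of $S$.
   Context: $G$ is a finite undirected graph and $X,Y$ are disjoint subsets of $V(G)$; $N(C)=(\bigcup_{v\in C}N(v))\setminus C$. An $X-Y$ separator is a set $K \subseteq V(G) \setminus (X \cup Y)$ such that $G \setminus K$ has no path from $X$ to $Y$; minimal means inclusion-minimal. $G$ is $X-Y$ normalized if $N(X)$ is the only minimum-cardinality $X-Y$ separator. Let $r$ be the minimum size of an $X-Y$ separator; the excess of an $X-Y$ separator $K$ is $|K|-r$. For $S\subseteq N(X)$, the cover excess $CE(S)$ is the excess of a smallest $X-Y$ separator disjoint with $S$ (infinite if $S$ is adjacent to $Y$). An $X-Y$ separator $K$ with $K\cap S=\emptyset$ and excess $CE(S)$ is a witness of $S$. $NR(G,Y,K)$ is the set of vertices not reachable from $Y$ in $G\setminus K$; $K \geq K'$ means $NR(G,Y,K)\supseteq NR(G,Y,K')$, and $K'<K$ means $K\geq K'$ and $NR(G,Y,K)\ne NR(G,Y,K')$. A minimal $X-Y$ separator $K$ is important if there is no $X-Y$ separator $K'$ with $K<K'$ and $|K|\geq|K'|$. An important witness of $S$ is a witness of $S$ that is an important $X-Y$ separator. *)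

theory Defs
  imports Main "HOL-Library.Extended_Nat"
begin

definition fin_graph :: "'a set \<Rightarrow> ('a \<Rightarrow> 'a \<Rightarrow> bool) \<Rightarrow> bool" where
  "fin_graph V E \<longleftrightarrow> finite V \<and> (\<forall>u v. E u v \<longrightarrow> E v u) \<and> (\<forall>v. \<not> E v v)
     \<and> (\<forall>u v. E u v \<longrightarrow> u \<in> V \<and> v \<in> V)"

definition nbh :: "'a set \<Rightarrow> ('a \<Rightarrow> 'a \<Rightarrow> bool) \<Rightarrow> 'a set \<Rightarrow> 'a set" where
  "nbh V E C = {w \<in> V. \<exists>v\<in>C. E v w} - C"

definition edges_minus :: "'a set \<Rightarrow> ('a \<Rightarrow> 'a \<Rightarrow> bool) \<Rightarrow> 'a set \<Rightarrow> ('a \<times> 'a) set" where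
  "edges_minus V E K = {(u, v). u \<in> V - K \<and> v \<in> V - K \<and> E u v}"

definition is_sep :: "'a set \<Rightarrow> ('a \<Rightarrow> 'a \<Rightarrow> bool) \<Rightarrow> 'a set \<Rightarrow> 'a set \<Rightarrow> 'a set \<Rightarrow> bool" where
  "is_sep V E X Y K \<longleftrightarrow> K \<subseteq> V - (X \<union> Y) \<and>
     \<not> (\<exists>x\<in>X. \<exists>y\<in>Y. (x, y) \<in> (edges_minus V E K)\<^sup>*)"

definition min_sep_size :: "'a set \<Rightarrow> ('a \<Rightarrow> 'a \<Rightarrow> bool) \<Rightarrow> 'a set \<Rightarrow> 'a set \<Rightarrow> nat" where
  "min_sep_size V E X Y = (LEAST n. \<exists>K. is_sep V E X Y K \<and> card K = n)"

definition excess :: "'a set \<Rightarrow> ('a \<Rightarrow> 'a \<Rightarrow> bool) \<Rightarrow> 'a set \<Rightarrow> 'a set \<Rightarrow> 'a set \<Rightarrow> nat" where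
  "excess V E X Y K = card K - min_sep_size V E X Y"

definition normalized :: "'a set \<Rightarrow> ('a \<Rightarrow> 'a \<Rightarrow> bool) \<Rightarrow> 'a set \<Rightarrow> 'a set \<Rightarrow> bool" where
  "normalized V E X Y \<longleftrightarrow>
     is_sep V E X Y (nbh V E X) \<and> card (nbh V E X) = min_sep_size V E X Y \<and>
     (\<forall>K. is_sep V E X Y K \<and> card K = min_sep_size V E X Y \<longrightarrow> K = nbh V E X)"

text \<open>Cover excess: excess of a smallest separator disjoint with S; infinite if none exists
  (which happens exactly when S is adjacent to Y).\<close>
definition cover_excess :: "'a set \<Rightarrow> ('a \<Rightarrow> 'a \<Rightarrow> bool) \<Rightarrow> 'a set \<Rightarrow> 'a set \<Rightarrow> 'a set \<Rightarrow> enat" where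
  "cover_excess V E X Y S =
     (if \<exists>K. is_sep V E X Y K \<and> K \<inter> S = {}
      then enat (LEAST e. \<exists>K. is_sep V E X Y K \<and> K \<inter> S = {} \<and> excess V E X Y K = e)
      else \<infinity>)"

definition is_witness :: "'a set \<Rightarrow> ('a \<Rightarrow> 'a \<Rightarrow> bool) \<Rightarrow> 'a set \<Rightarrow> 'a set \<Rightarrow> 'a set \<Rightarrow> 'a set \<Rightarrow> bool" where
  "is_witness V E X Y S K \<longleftrightarrow> is_sep V E X Y K \<and> K \<inter> S = {} \<and>
     enat (excess V E X Y K) = cover_excess V E X Y S"

definition NR :: "'a set \<Rightarrow> ('a \<Rightarrow> 'a \<Rightarrow> bool) \<Rightarrow> 'a set \<Rightarrow> 'a set \<Rightarrow> 'a set" where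
  "NR V E Y K = V - {v. \<exists>y\<in>Y - K. y \<in> V \<and> (y, v) \<in> (edges_minus V E K)\<^sup>*}"

definition sep_ge :: "'a set \<Rightarrow> ('a \<Rightarrow> 'a \<Rightarrow> bool) \<Rightarrow> 'a set \<Rightarrow> 'a set \<Rightarrow> 'a set \<Rightarrow> bool" where
  "sep_ge V E Y K K' \<longleftrightarrow> NR V E Y K' \<subseteq> NR V E Y K"

definition sep_less :: "'a set \<Rightarrow> ('a \<Rightarrow> 'a \<Rightarrow> bool) \<Rightarrow> 'a set \<Rightarrow> 'a set \<Rightarrow> 'a set \<Rightarrow> bool" where
  "sep_less V E Y K' K \<longleftrightarrow> sep_ge V E Y K K' \<and> NR V E Y K \<noteq> NR V E Y K'"

definition minimal_sep :: "'a set \<Rightarrow> ('a \<Rightarrow> 'a \<Rightarrow> bool) \<Rightarrow> 'a set \<Rightarrow> 'a set \<Rightarrow> 'a set \<Rightarrow> bool" where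
  "minimal_sep V E X Y K \<longleftrightarrow> is_sep V E X Y K \<and> (\<forall>K'. K' \<subset> K \<longrightarrow> \<not> is_sep V E X Y K')"

definition important_sep :: "'a set \<Rightarrow> ('a \<Rightarrow> 'a \<Rightarrow> bool) \<Rightarrow> 'a set \<Rightarrow> 'a set \<Rightarrow> 'a set \<Rightarrow> bool" where
  "important_sep V E X Y K \<longleftrightarrow> minimal_sep V E X Y K \<and>
     \<not> (\<exists>K'. is_sep V E X Y K' \<and> sep_less V E Y K K' \<and> card K \<ge> card K')"

definition important_witness :: "'a set \<Rightarrow> ('a \<Rightarrow> 'a \<Rightarrow> bool) \<Rightarrow> 'a set \<Rightarrow> 'a set \<Rightarrow> 'a set \<Rightarrow> 'a set \<Rightarrow> bool" where
  "important_witness V E X Y S K \<longleftrightarrow> is_witness V E X Y S K \<and> important_sep V E X Y K"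

end

theory Submission
  imports Defs
begin

definition bd :: "'a set \<Rightarrow> ('a \<Rightarrow> 'a \<Rightarrow> bool) \<Rightarrow> 'a set \<Rightarrow> 'a set" where
  "bd V E A = {v\<in>A. \<exists>u\<in>V-A. E v u}"

locale gsetting =
  fixes V :: "'a set" and E :: "'a \<Rightarrow> 'a \<Rightarrow> bool" and X Y :: "'a set"
  assumes g: "fin_graph V E" and XV: "X \<subseteq> V" and YV: "Y \<subseteq> V" and XY: "X \<inter> Y = {}"
begin

lemma finV: "finite V" using g by (simp add: fin_graph_def)
lemma symE: "E u v \<Longrightarrow> E v u" using g by (simp add: fin_graph_def)
lemma inV: "E u v \<Longrightarrow> u \<in> V \<and> v \<in> V" using g by (simp add: fin_graph_def)

lemma em_sym: "(u,v) \<in> edges_minus V E K \<Longrightarrow> (v,u) \<in> edges_minus V E K"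
  by (auto simp: edges_minus_def symE)

lemma rt_sym: "(u,v) \<in> (edges_minus V E K)\<^sup>* \<Longrightarrow> (v,u) \<in> (edges_minus V E K)\<^sup>*"
proof (induction rule: rtrancl.induct)
  case (rtrancl_refl a) then show ?case by simp
next
  case (rtrancl_into_rtrancl a b c)
  then show ?case using em_sym converse_rtrancl_into_rtrancl by metis
qed

lemma block:
  assumes "Y \<inter> C = {}" "\<forall>u v. E u v \<and> u \<notin> C \<and> v \<in> C \<longrightarrow> u \<in> K \<or> v \<in> K"
    "y \<in> Y" "(y,v) \<in> (edges_minus V E K)\<^sup>*"
  shows "v \<notin> C"
  using assms(4)
proof (induction rule: rtrancl_induct)
  case base then show ?case using assms(1,3) by auto
next
  case (step a b) then show ?case using assms(2) by (auto simp: edges_minus_def)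
qed

lemma sep_block:
  assumes "Y \<inter> C = {}" "X \<subseteq> C" "\<forall>u v. E u v \<and> u \<notin> C \<and> v \<in> C \<longrightarrow> u \<in> K \<or> v \<in> K"
    "K \<subseteq> V - (X \<union> Y)"
  shows "is_sep V E X Y K"
  unfolding is_sep_def
proof (intro conjI notI)
  show "K \<subseteq> V - (X \<union> Y)" by fact
  assume "\<exists>x\<in>X. \<exists>y\<in>Y. (x, y) \<in> (edges_minus V E K)\<^sup>*"
  then obtain x y where "x \<in> X" "y \<in> Y" "(y,x) \<in> (edges_minus V E K)\<^sup>*" using rt_sym by blast
  then show False using block[OF assms(1,3)] assms(2) by blast
qed

lemma NR_block:
  assumes "Y \<inter> C = {}" "\<forall>u v. E u v \<and> u \<notin> C \<and> v \<in> C \<longrightarrow> u \<in> K \<or> v \<in> K"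
  shows "C \<inter> V \<subseteq> NR V E Y K"
  unfolding NR_def using block[OF assms] by blast

lemma K_NR: "K \<subseteq> V \<Longrightarrow> K \<subseteq> NR V E Y K"
  unfolding NR_def
proof safe
  fix k y assume "K \<subseteq> V" "k \<in> K" "y \<in> Y" "y \<notin> K" "(y,k) \<in> (edges_minus V E K)\<^sup>*"
  then show False by (auto simp: edges_minus_def elim: rtranclE)
qed auto

lemma sep_KV: "is_sep V E X Y K \<Longrightarrow> K \<subseteq> V" by (auto simp: is_sep_def)

lemma sep_Y: "is_sep V E X Y K \<Longrightarrow> Y \<inter> NR V E Y K = {}"
  unfolding NR_def is_sep_def using YV by blast

lemma sep_X: "is_sep V E X Y K \<Longrightarrow> X \<subseteq> NR V E Y K"
  unfolding NR_def is_sep_def using XV rt_sym by blast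

lemma NR_V: "NR V E Y K \<subseteq> V" by (auto simp: NR_def)

lemma closure:
  assumes "K \<subseteq> V" "u \<in> V" "u \<notin> NR V E Y K" "E u v" "v \<notin> K"
  shows "v \<notin> NR V E Y K"
proof -
  have uK: "u \<notin> K" using K_NR[OF assms(1)] assms(3) by blast
  from assms(2,3) obtain y where y: "y \<in> Y - K" "y \<in> V" "(y,u) \<in> (edges_minus V E K)\<^sup>*"
    by (auto simp: NR_def)
  have "(u,v) \<in> edges_minus V E K" using uK assms(4,5) inV[OF assms(4)] by (auto simp: edges_minus_def)
  with y have "(y,v) \<in> (edges_minus V E K)\<^sup>*" by simp
  with y show ?thesis by (auto simp: NR_def)
qed

lemma bd_sub: "K \<subseteq> V \<Longrightarrow> bd V E (NR V E Y K) \<subseteq> K"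
proof
  fix v assume KV: "K \<subseteq> V" and v: "v \<in> bd V E (NR V E Y K)"
  then obtain u where u: "u \<in> V" "u \<notin> NR V E Y K" "E v u" "v \<in> NR V E Y K" by (auto simp: bd_def)
  show "v \<in> K"
  proof (rule ccontr)
    assume "v \<notin> K"
    then show False using closure[OF KV u(1,2) symE[OF u(3)]] u(4) by blast
  qed
qed

lemma bd_V: "bd V E A \<subseteq> V" by (auto simp: bd_def dest: inV)
lemma bd_A: "bd V E A \<subseteq> A" by (auto simp: bd_def)

lemma bd_int: "bd V E (A \<inter> B) \<subseteq> bd V E A \<union> bd V E B" by (auto simp: bd_def)
lemma bd_un: "bd V E (A \<union> B) \<subseteq> bd V E A \<union> bd V E B" by (auto simp: bd_def)
lemma bd_ii: "bd V E (A \<inter> B) \<inter> bd V E (A \<union> B) \<subseteq> bd V E A \<inter> bd V E B" by (auto simp: bd_def)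

lemma submod: "card (bd V E (A \<inter> B)) + card (bd V E (A \<union> B)) \<le> card (bd V E A) + card (bd V E B)"
proof -
  have f: "finite (bd V E C)" for C using finV bd_V finite_subset by blast
  have "card (bd V E (A \<inter> B)) + card (bd V E (A \<union> B)) =
     card (bd V E (A \<inter> B) \<union> bd V E (A \<union> B)) + card (bd V E (A \<inter> B) \<inter> bd V E (A \<union> B))"
    using card_Un_Int f by blast
  also have "\<dots> \<le> card (bd V E A \<union> bd V E B) + card (bd V E A \<inter> bd V E B)"
    using bd_int bd_un bd_ii f by (intro add_mono card_mono) auto
  also have "\<dots> = card (bd V E A) + card (bd V E B)" using card_Un_Int f by metis
  finally show ?thesis .
qed

lemma bd_sep:
  assumes "X \<subseteq> C" "Y \<inter> C = {}" "X \<inter> bd V E C = {}"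
  shows "is_sep V E X Y (bd V E C)" "C \<inter> V \<subseteq> NR V E Y (bd V E C)"
proof -
  have c: "\<forall>u v. E u v \<and> u \<notin> C \<and> v \<in> C \<longrightarrow> u \<in> bd V E C \<or> v \<in> bd V E C"
    by (auto simp: bd_def dest: inV symE)
  have "bd V E C \<subseteq> V - (X \<union> Y)" using bd_V bd_A assms by blast
  then show "is_sep V E X Y (bd V E C)" using sep_block[OF assms(2,1) c] by blast
  show "C \<inter> V \<subseteq> NR V E Y (bd V E C)" using NR_block[OF assms(2) c] .
qed

lemma NR_mono:
  assumes "K1 \<subseteq> K2" "Y \<inter> K2 = {}"
  shows "NR V E Y K1 \<subseteq> NR V E Y K2"
proof -
  have "edges_minus V E K2 \<subseteq> edges_minus V E K1" using assms(1) by (auto simp: edges_minus_def)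
  then have "(edges_minus V E K2)\<^sup>* \<subseteq> (edges_minus V E K1)\<^sup>*" by (rule rtrancl_mono)
  then show ?thesis using assms unfolding NR_def by blast
qed

lemma NR_bd:
  assumes "is_sep V E X Y K"
  shows "NR V E Y (bd V E (NR V E Y K)) = NR V E Y K" "is_sep V E X Y (bd V E (NR V E Y K))"
proof -
  have KV: "K \<subseteq> V" using sep_KV[OF assms] .
  have h: "X \<subseteq> NR V E Y K" "Y \<inter> NR V E Y K = {}" "X \<inter> bd V E (NR V E Y K) = {}"
    using sep_X[OF assms] sep_Y[OF assms] bd_sub[OF KV] assms by (auto simp: is_sep_def)
  show "is_sep V E X Y (bd V E (NR V E Y K))" using bd_sep(1)[OF h] .
  have "NR V E Y K \<subseteq> NR V E Y (bd V E (NR V E Y K))" using bd_sep(2)[OF h] NR_V by blast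
  moreover have "NR V E Y (bd V E (NR V E Y K)) \<subseteq> NR V E Y K"
    using NR_mono[OF bd_sub[OF KV]] assms by (auto simp: is_sep_def)
  ultimately show "NR V E Y (bd V E (NR V E Y K)) = NR V E Y K" by blast
qed

lemma r_le: "is_sep V E X Y K \<Longrightarrow> min_sep_size V E X Y \<le> card K"
  unfolding min_sep_size_def by (rule Least_le) blast

lemma witness_iff:
  assumes ex: "\<exists>K0. is_sep V E X Y K0 \<and> K0 \<inter> S = {}"
  shows "is_witness V E X Y S K \<longleftrightarrow> (is_sep V E X Y K \<and> K \<inter> S = {} \<and>
           (\<forall>K'. is_sep V E X Y K' \<and> K' \<inter> S = {} \<longrightarrow> card K \<le> card K'))"
proof -
  define L where "L = (LEAST e. \<exists>K. is_sep V E X Y K \<and> K \<inter> S = {} \<and> excess V E X Y K = e)"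
  have ce: "cover_excess V E X Y S = enat L" using ex by (simp add: cover_excess_def L_def)
  show ?thesis
  proof
    assume w: "is_witness V E X Y S K"
    then have k: "is_sep V E X Y K" "K \<inter> S = {}" "excess V E X Y K = L"
      by (auto simp: is_witness_def ce)
    show "is_sep V E X Y K \<and> K \<inter> S = {} \<and>
           (\<forall>K'. is_sep V E X Y K' \<and> K' \<inter> S = {} \<longrightarrow> card K \<le> card K')"
    proof (intro conjI allI impI)
      fix K' assume K': "is_sep V E X Y K' \<and> K' \<inter> S = {}"
      then have "L \<le> excess V E X Y K'" unfolding L_def by (intro Least_le) blast
      then show "card K \<le> card K'" using k(3) r_le[OF k(1)] r_le[of K'] K'
        by (simp add: excess_def)
    qed (use k in auto)
  next
    assume h: "is_sep V E X Y K \<and> K \<inter> S = {} \<and>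
           (\<forall>K'. is_sep V E X Y K' \<and> K' \<inter> S = {} \<longrightarrow> card K \<le> card K')"
    have "L = excess V E X Y K" unfolding L_def
    proof (rule Least_equality)
      show "\<exists>K'. is_sep V E X Y K' \<and> K' \<inter> S = {} \<and> excess V E X Y K' = excess V E X Y K"
        using h by blast
    next
      fix e assume "\<exists>K'. is_sep V E X Y K' \<and> K' \<inter> S = {} \<and> excess V E X Y K' = e"
      then obtain K' where "is_sep V E X Y K'" "K' \<inter> S = {}" "excess V E X Y K' = e" by blast
      then show "excess V E X Y K \<le> e" using h by (auto simp: excess_def intro: diff_le_mono)
    qed
    then show "is_witness V E X Y S K" using h by (simp add: is_witness_def ce)
  qed
qed

lemma main:
  assumes nrm: "normalized V E X Y"
    and SN: "S \<subseteq> nbh V E X"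
    and noadj: "\<forall>s\<in>S. \<forall>y\<in>Y. \<not> E s y"
  shows "\<exists>!K. important_witness V E X Y S K"
proof -
  define P where "P K \<longleftrightarrow> is_sep V E X Y K \<and> K \<inter> S = {}" for K
  have Nsep: "is_sep V E X Y (nbh V E X)" using nrm by (simp add: normalized_def)
  have NXY: "nbh V E X \<inter> (X \<union> Y) = {}" using Nsep by (auto simp: is_sep_def)
  define C where "C = X \<union> S"
  have C1: "Y \<inter> C = {}" using NXY SN XY by (auto simp: C_def)
  have C2: "\<forall>u v. E u v \<and> u \<notin> C \<and> v \<in> C \<longrightarrow> u \<in> nbh V E C \<or> v \<in> nbh V E C"
  proof (intro allI impI)
    fix u v assume h: "E u v \<and> u \<notin> C \<and> v \<in> C"
    then have "u \<in> V" "E v u" using inV symE by blast+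
    then show "u \<in> nbh V E C \<or> v \<in> nbh V E C" using h unfolding nbh_def by blast
  qed
  have C3: "nbh V E C \<subseteq> V - (X \<union> Y)"
  proof
    fix w assume w: "w \<in> nbh V E C"
    then have "w \<in> V" "w \<notin> X" "w \<notin> S" by (auto simp: nbh_def C_def)
    moreover have "w \<notin> Y"
    proof
      assume wY: "w \<in> Y"
      from w obtain v where v: "v \<in> C" "E v w" by (auto simp: nbh_def)
      show False
      proof (cases "v \<in> X")
        case True
        then have "w \<in> nbh V E X" using \<open>w \<in> V\<close> \<open>w \<notin> X\<close> v by (auto simp: nbh_def)
        then show False using NXY wY by blast
      next
        case False
        then have "v \<in> S" using v by (auto simp: C_def)
        then show False using noadj wY v by blast
      qed
    qed
    ultimately show "w \<in> V - (X \<union> Y)" by blast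
  qed
  have XC: "X \<subseteq> C" by (simp add: C_def)
  have "nbh V E C \<inter> S = {}" unfolding nbh_def C_def by blast
  then have P0: "P (nbh V E C)"
    unfolding P_def using sep_block[OF C1 XC C2 C3] by blast
  have ex: "\<exists>K0. is_sep V E X Y K0 \<and> K0 \<inter> S = {}" using P0 P_def by blast
  define W where "W K \<longleftrightarrow> P K \<and> (\<forall>K'. P K' \<longrightarrow> card K \<le> card K')" for K
  have Wiff: "is_witness V E X Y S K \<longleftrightarrow> W K" for K
    using witness_iff[OF ex] by (simp add: W_def P_def)
  obtain Km where Km: "P Km" "\<forall>K'. P K' \<longrightarrow> card Km \<le> card K'"
    using ex_has_least_nat[of P, OF P0, of card] by blast
  then have WKm: "W Km" by (simp add: W_def)
  have bnd: "\<forall>K. W K \<longrightarrow> card (NR V E Y K) < Suc (card V)"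
    using card_mono[OF finV NR_V] by (simp add: le_imp_less_Suc)
  obtain Ks where Ks: "W Ks" and Ksmax: "\<forall>K. W K \<longrightarrow> card (NR V E Y K) \<le> card (NR V E Y Ks)"
    using ex_has_greatest_nat[of W Km, OF WKm bnd] by blast
  have finK: "P K \<Longrightarrow> finite K" for K
    using finV sep_KV finite_subset unfolding P_def by blast
  have finNR: "finite (NR V E Y K)" for K using finV NR_V finite_subset by blast
  have WS: "P K \<Longrightarrow> S \<subseteq> NR V E Y K" for K
  proof
    fix s assume PK: "P K" and s: "s \<in> S"
    then obtain x where x: "x \<in> X" "E x s" "s \<in> V" using SN by (auto simp: nbh_def)
    have sK: "s \<notin> K" using PK s by (auto simp: P_def)
    have xK: "x \<notin> K" using PK x by (auto simp: P_def is_sep_def)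
    show "s \<in> NR V E Y K"
    proof (rule ccontr)
      assume "s \<notin> NR V E Y K"
      then have "x \<notin> NR V E Y K"
        using closure[OF sep_KV x(3) _ symE[OF x(2)] xK] PK by (auto simp: P_def)
      then show False using sep_X PK x(1) by (auto simp: P_def)
    qed
  qed
  have Wcard: "card K1 = card K2" if "W K1" "W K2" for K1 K2
  proof -
    have "card K1 \<le> card K2" using that by (simp add: W_def)
    moreover have "card K2 \<le> card K1" using that by (simp add: W_def)
    ultimately show ?thesis by simp
  qed
  have Wbd: "W K \<Longrightarrow> bd V E (NR V E Y K) = K" for K
  proof -
    assume WK: "W K"
    then have PK: "P K" by (simp add: W_def)
    have sub: "bd V E (NR V E Y K) \<subseteq> K" using bd_sub sep_KV PK by (auto simp: P_def)
    have "P (bd V E (NR V E Y K))" using NR_bd(2) PK sub by (auto simp: P_def)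
    then have "card K \<le> card (bd V E (NR V E Y K))" using WK by (simp add: W_def)
    then show ?thesis using card_seteq[OF finK[OF PK] sub] by blast
  qed
  have claim1: "W K \<Longrightarrow> NR V E Y K \<subseteq> NR V E Y Ks" for K
  proof -
    assume WK: "W K"
    define A where "A = NR V E Y K"
    define B where "B = NR V E Y Ks"
    have PK: "P K" and PKs: "P Ks" using WK Ks by (auto simp: W_def)
    have bA: "bd V E A = K" using Wbd[OF WK] A_def by simp
    have bB: "bd V E B = Ks" using Wbd[OF Ks] B_def by simp
    have XA: "X \<subseteq> A" "X \<subseteq> B" using sep_X PK PKs by (auto simp: A_def B_def P_def)
    have YA: "Y \<inter> A = {}" "Y \<inter> B = {}" using sep_Y PK PKs by (auto simp: A_def B_def P_def)
    have KX: "K \<inter> X = {}" "Ks \<inter> X = {}" "K \<inter> S = {}" "Ks \<inter> S = {}"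
      using PK PKs by (auto simp: P_def is_sep_def)
    have bi: "bd V E (A \<inter> B) \<subseteq> K \<union> Ks" "bd V E (A \<union> B) \<subseteq> K \<union> Ks"
      using bd_int bd_un bA bB by blast+
    have Pi: "P (bd V E (A \<inter> B))" unfolding P_def
      using bd_sep(1)[of "A \<inter> B"] XA YA bi KX by blast
    have Pu: "P (bd V E (A \<union> B))" unfolding P_def
      using bd_sep(1)[of "A \<union> B"] XA YA bi KX by blast
    have NRu: "(A \<union> B) \<inter> V \<subseteq> NR V E Y (bd V E (A \<union> B))"
      using bd_sep(2)[of "A \<union> B"] XA YA bi KX by blast
    have c1: "card K \<le> card (bd V E (A \<inter> B))" using WK Pi by (simp add: W_def)
    have c2: "card K = card Ks" using Wcard WK Ks by blast
    have "card (bd V E (A \<inter> B)) + card (bd V E (A \<union> B)) \<le> card K + card Ks"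
      using submod[of A B] bA bB by simp
    then have cu: "card (bd V E (A \<union> B)) \<le> card K" using c1 c2 by linarith
    have Wu: "W (bd V E (A \<union> B))" unfolding W_def using Pu cu WK by (auto simp: W_def)
    have "B \<subseteq> NR V E Y (bd V E (A \<union> B))" using NRu NR_V B_def by blast
    moreover have "card (NR V E Y (bd V E (A \<union> B))) \<le> card B" using Ksmax Wu B_def by blast
    ultimately have "B = NR V E Y (bd V E (A \<union> B))" using card_seteq[OF finNR] by blast
    moreover have "A \<subseteq> NR V E Y (bd V E (A \<union> B))" using NRu NR_V A_def by blast
    ultimately show ?thesis using A_def B_def by blast
  qed
  have minsep: "W K \<Longrightarrow> minimal_sep V E X Y K" for K
  proof -
    assume WK: "W K"
    then have PK: "P K" by (simp add: W_def)
    show ?thesis unfolding minimal_sep_def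
    proof (intro conjI allI impI notI)
      show "is_sep V E X Y K" using PK by (simp add: P_def)
      fix K' assume ps: "K' \<subset> K" and sK': "is_sep V E X Y K'"
      then have "P K'" using PK by (auto simp: P_def)
      then have "card K \<le> card K'" using WK by (simp add: W_def)
      moreover have "card K' < card K" using psubset_card_mono[OF finK[OF PK] ps] .
      ultimately show False by simp
    qed
  qed
  have impKs: "important_sep V E X Y Ks"
    unfolding important_sep_def
  proof (intro conjI notI)
    show "minimal_sep V E X Y Ks" using minsep[OF Ks] .
    assume "\<exists>K'. is_sep V E X Y K' \<and> sep_less V E Y Ks K' \<and> card K' \<le> card Ks"
    then obtain K' where K': "is_sep V E X Y K'" "NR V E Y Ks \<subseteq> NR V E Y K'"
      "NR V E Y K' \<noteq> NR V E Y Ks" "card K' \<le> card Ks"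
      by (auto simp: sep_less_def sep_ge_def)
    define K2 where "K2 = bd V E (NR V E Y K')"
    have K2s: "is_sep V E X Y K2" "NR V E Y K2 = NR V E Y K'" using NR_bd[OF K'(1)] K2_def by auto
    have K2sub: "K2 \<subseteq> K'" using bd_sub sep_KV K'(1) K2_def by blast
    have "finite K'" using finV sep_KV[OF K'(1)] finite_subset by blast
    then have cK2: "card K2 \<le> card Ks" using card_mono[OF _ K2sub] K'(4) by linarith
    show False
    proof (cases "K2 \<inter> S = {}")
      case True
      then have "W K2" using K2s cK2 Ks by (auto simp: W_def P_def)
      then have "NR V E Y K' \<subseteq> NR V E Y Ks" using claim1[OF \<open>W K2\<close>] K2s(2) by simp
      then show False using K'(2,3) by blast
    next
      case False
      then obtain s where s: "s \<in> K2" "s \<in> S" by blast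
      then obtain u where u: "s \<in> NR V E Y K'" "u \<in> V" "u \<notin> NR V E Y K'" "E s u"
        by (auto simp: K2_def bd_def)
      have "s \<in> NR V E Y Ks" using WS Ks s(2) by (auto simp: W_def)
      moreover have "u \<notin> NR V E Y Ks" using u K'(2) by blast
      ultimately have "s \<in> bd V E (NR V E Y Ks)" using u by (auto simp: bd_def)
      then have "s \<in> Ks" using Wbd[OF Ks] by simp
      then show False using Ks s(2) by (auto simp: W_def P_def)
    qed
  qed
  show ?thesis
  proof (rule ex1I)
    show "important_witness V E X Y S Ks" using impKs Ks Wiff[of Ks] unfolding important_witness_def by blast
  next
    fix K assume iw: "important_witness V E X Y S K"
    then have WK: "W K" and iK: "important_sep V E X Y K"
      using Wiff[of K] unfolding important_witness_def by blast+
    have sub: "NR V E Y K \<subseteq> NR V E Y Ks" using claim1[OF WK] .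
    have "NR V E Y K = NR V E Y Ks"
    proof (rule ccontr)
      assume ne: "NR V E Y K \<noteq> NR V E Y Ks"
      have "is_sep V E X Y Ks" using Ks by (simp add: W_def P_def)
      moreover have "sep_less V E Y K Ks" using sub ne unfolding sep_less_def sep_ge_def by blast
      moreover have "card Ks \<le> card K" using Wcard[OF WK Ks] by simp
      ultimately show False using iK unfolding important_sep_def by blast
    qed
    then have "bd V E (NR V E Y K) = bd V E (NR V E Y Ks)" by (rule arg_cong)
    then show "K = Ks" unfolding Wbd[OF WK] Wbd[OF Ks] .
  qed
qed

end

theorem lemma2:
  fixes V :: "'a set" and E :: "'a \<Rightarrow> 'a \<Rightarrow> bool" and X Y S :: "'a set"
  assumes "fin_graph V E"
    and "X \<subseteq> V" and "Y \<subseteq> V" and "X \<inter> Y = {}"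
    and "normalized V E X Y"
    and "S \<subseteq> nbh V E X"
    and "\<forall>s\<in>S. \<forall>y\<in>Y. \<not> E s y"
  shows "\<exists>!K. important_witness V E X Y S K"
proof -
  interpret gsetting V E X Y using assms(1-4) by unfold_locales
  show ?thesis by (rule main[OF assms(5-7)])
qed

end
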